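(* For any residuated semigroup $\mathbf A$ the following are equivalent: (1) $\mathbf A$ is balanced; (2) $\mathbf A$ satisfies $x\backslash x= x/x$, $y\le (x/x)y$ and $y\le y(x\backslash x)$ for all $x,y$; (3) $\mathbf A$ satisfies $(x\backslash x)y=y(x\backslash x)$ and $y\le y(x\backslash x)$ for all $x,y$; (4) $\mathbf A$ satisfies $(x/x)y=y(x/x)$ and $y\le (x/x)y$ for all $x,y$.
   Context: A residuated semigroup is a structure $\langle A,\le,\cdot,\backslash,/\rangle$ where $\langle A,\le\rangle$ is a poset, $\langle A,\cdot\rangle$ is a semigroup (we write $xy$ for $x\cdot y$), and for all $x,y,z$: $xy\le z\iff x\le z/y\iff y\le x\backslash z$. An element $p$ is positive if $a\le pa$ and $a\le ap$ for all $a\in A$. Self-residuals are elements of the form $a\backslash a$ or $a/a$. A residuated semigroup is balanced if it satisfies $x\backslash x=x/x$ for all $x$ and all its self-residuals are positive. *)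

theory Defs
  imports Main
begin

definition residuated_semigroup ::
  "('a::{order,semigroup_mult} \<Rightarrow> 'a \<Rightarrow> 'a) \<Rightarrow> ('a \<Rightarrow> 'a \<Rightarrow> 'a) \<Rightarrow> bool" where
  "residuated_semigroup ldiv rdiv \<longleftrightarrow>
     (\<forall>x y z. (x * y \<le> z \<longleftrightarrow> x \<le> rdiv z y) \<and> (x * y \<le> z \<longleftrightarrow> y \<le> ldiv x z))"

definition positive :: "'a::{order,semigroup_mult} \<Rightarrow> bool" where
  "positive p \<longleftrightarrow> (\<forall>a. a \<le> p * a \<and> a \<le> a * p)"

definition self_residual ::
  "('a::{order,semigroup_mult} \<Rightarrow> 'a \<Rightarrow> 'a) \<Rightarrow> ('a \<Rightarrow> 'a \<Rightarrow> 'a) \<Rightarrow> 'a \<Rightarrow> bool" where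
  "self_residual ldiv rdiv s \<longleftrightarrow> (\<exists>a. s = ldiv a a \<or> s = rdiv a a)"

definition balanced ::
  "('a::{order,semigroup_mult} \<Rightarrow> 'a \<Rightarrow> 'a) \<Rightarrow> ('a \<Rightarrow> 'a \<Rightarrow> 'a) \<Rightarrow> bool" where
  "balanced ldiv rdiv \<longleftrightarrow>
     (\<forall>x. ldiv x x = rdiv x x) \<and> (\<forall>s. self_residual ldiv rdiv s \<longrightarrow> positive s)"

end

theory Submission
  imports Defs
begin

lemma rs_basic:
  fixes ldiv rdiv :: "'a::{order,semigroup_mult} \<Rightarrow> 'a \<Rightarrow> 'a" and x y z a b c :: 'a
  assumes R: "residuated_semigroup ldiv rdiv"
  shows rsL: "x*y \<le> z \<longleftrightarrow> x \<le> rdiv z y"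
    and rsR: "x*y \<le> z \<longleftrightarrow> y \<le> ldiv x z"
    and rsml: "a \<le> b \<Longrightarrow> a*c \<le> b*c"
    and rsmr: "a \<le> b \<Longrightarrow> c*a \<le> c*b"
    and rsl: "x * ldiv x z \<le> z"
    and rsr: "rdiv z y * y \<le> z"
proof -
  show L: "\<And>x y z. x*y \<le> z \<longleftrightarrow> x \<le> rdiv z y" using R unfolding residuated_semigroup_def by blast
  show Rr: "\<And>x y z. x*y \<le> z \<longleftrightarrow> y \<le> ldiv x z" using R unfolding residuated_semigroup_def by blast
  show "a \<le> b \<Longrightarrow> a*c \<le> b*c" using L[of b c "b*c"] L[of a c "b*c"] by (meson order_trans order_refl)
  show "a \<le> b \<Longrightarrow> c*a \<le> c*b" using Rr[of c b "c*b"] Rr[of c a "c*b"] by (meson order_trans order_refl)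
  show "x * ldiv x z \<le> z" using Rr by blast
  show "rdiv z y * y \<le> z" using L by blast
qed

lemma bal_central:
  fixes ldiv rdiv :: "'a::{order,semigroup_mult} \<Rightarrow> 'a \<Rightarrow> 'a"
  assumes R: "residuated_semigroup ldiv rdiv" and B: "balanced ldiv rdiv"
  shows "ldiv x x * y = y * ldiv x x"
proof -
  have eq: "\<And>z. ldiv z z = rdiv z z" using B unfolding balanced_def by blast
  have pos: "\<And>z a. a \<le> ldiv z z * a \<and> a \<le> a * ldiv z z"
    using B unfolding balanced_def self_residual_def positive_def by blast
  define u where "u = ldiv x x"
  have uu: "u*u \<le> u"
  proof -
    have "x*(u*u) = (x*u)*u" by (simp add: mult.assoc)
    also have "\<dots> \<le> x*u" using rsml[OF R, of "x*u" x u] rsl[OF R, of x x] u_def by simp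
    also have "\<dots> \<le> x" using rsl[OF R, of x x] u_def by simp
    finally show ?thesis using rsR[OF R] u_def by blast
  qed
  define w where "w = u*y"
  have "u*w \<le> w" using rsml[OF R uu, of y] by (simp add: w_def mult.assoc)
  then have "u \<le> ldiv w w" using rsL[OF R] eq by metis
  then have "w*u \<le> w" using rsR[OF R] by blast
  moreover have "w \<le> w*u" using pos u_def by blast
  ultimately have 1: "u*y*u = u*y" unfolding w_def by (simp add: antisym)
  define w' where "w' = y*u"
  have "w'*u \<le> w'" using rsmr[OF R uu, of y] by (simp add: w'_def mult.assoc)
  then have "u \<le> rdiv w' w'" using rsR[OF R] eq by metis
  then have "u*w' \<le> w'" using rsL[OF R] by blast
  moreover have "w' \<le> u*w'" using pos u_def by blast
  ultimately have 2: "u*y*u = y*u" unfolding w'_def by (simp add: antisym mult.assoc)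
  show ?thesis using 1 2 u_def by simp
qed

lemma three_to_one:
  fixes ldiv rdiv :: "'a::{order,semigroup_mult} \<Rightarrow> 'a \<Rightarrow> 'a"
  assumes R: "residuated_semigroup ldiv rdiv"
    and H: "\<forall>x y. ldiv x x * y = y * ldiv x x \<and> y \<le> y * ldiv x x"
  shows "ldiv x x = rdiv x x"
proof -
  define u where "u = ldiv x x"
  define v where "v = rdiv x x"
  have xu: "x*u \<le> x" using rsl[OF R] u_def by blast
  have "x \<le> x*u" using H u_def by blast
  then have "x*u = x" using xu by simp
  then have ux: "u*x = x" using H u_def by metis
  then have uv: "u \<le> v" using rsL[OF R, of u x x] v_def by simp
  have vx1: "v*x \<le> x" using rsr[OF R] v_def by blast
  have "u*x \<le> v*x" using rsml[OF R uv] .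
  then have vx: "v*x = x" using ux vx1 by simp
  define r where "r = ldiv v v"
  have vv: "v*v \<le> v"
  proof -
    have "(v*v)*x = v*(v*x)" by (simp add: mult.assoc)
    also have "\<dots> = x" using vx by simp
    finally show ?thesis using rsL[OF R] v_def by (metis order_refl)
  qed
  then have vr: "v \<le> r" using rsR[OF R] r_def by blast
  have "r*x = r*(v*x)" using vx by simp
  also have "\<dots> = (v*r)*x" using H r_def by (metis mult.assoc)
  also have "\<dots> \<le> v*x" using rsml[OF R rsl[OF R, of v v]] r_def by simp
  also have "\<dots> = x" using vx .
  finally have "r \<le> v" using rsL[OF R] v_def by blast
  then have rv: "r = v" using vr by simp
  have "x*v = v*x" using H r_def rv by metis
  then have "x*v \<le> x" using vx by simp
  then have "v \<le> u" using rsR[OF R] u_def by blast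
  then show ?thesis using uv u_def v_def by simp
qed

lemma four_to_one:
  fixes ldiv rdiv :: "'a::{order,semigroup_mult} \<Rightarrow> 'a \<Rightarrow> 'a"
  assumes R: "residuated_semigroup ldiv rdiv"
    and H: "\<forall>x y. rdiv x x * y = y * rdiv x x \<and> y \<le> rdiv x x * y"
  shows "ldiv x x = rdiv x x"
proof -
  define u where "u = rdiv x x"
  define v where "v = ldiv x x"
  have xu: "u*x \<le> x" using rsr[OF R] u_def by blast
  have "x \<le> u*x" using H u_def by blast
  then have "u*x = x" using xu by simp
  then have ux: "x*u = x" using H u_def by metis
  then have uv: "u \<le> v" using rsR[OF R, of x u x] v_def by simp
  have vx1: "x*v \<le> x" using rsl[OF R] v_def by blast
  have "x*u \<le> x*v" using rsmr[OF R uv] .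
  then have vx: "x*v = x" using ux vx1 by simp
  define r where "r = rdiv v v"
  have vv: "v*v \<le> v"
  proof -
    have "x*(v*v) = (x*v)*v" by (simp add: mult.assoc)
    also have "\<dots> = x" using vx by simp
    finally show ?thesis using rsR[OF R] v_def by (metis order_refl)
  qed
  then have vr: "v \<le> r" using rsL[OF R] r_def by blast
  have "x*r = (x*v)*r" using vx by simp
  also have "\<dots> = x*(r*v)" using H r_def by (metis mult.assoc)
  also have "\<dots> \<le> x*v" using rsmr[OF R rsr[OF R, of v v]] r_def by simp
  also have "\<dots> = x" using vx .
  finally have "r \<le> v" using rsR[OF R] v_def by blast
  then have rv: "r = v" using vr by simp
  have "v*x = x*v" using H r_def rv by metis
  then have "v*x \<le> x" using vx by simp
  then have "v \<le> u" using rsL[OF R] u_def by blast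
  then show ?thesis using uv u_def v_def by simp
qed

theorem proposition3p2:
  fixes ldiv rdiv :: "'a::{order,semigroup_mult} \<Rightarrow> 'a \<Rightarrow> 'a"
  assumes "residuated_semigroup ldiv rdiv"
  shows "(balanced ldiv rdiv
          \<longleftrightarrow> (\<forall>x y. ldiv x x = rdiv x x \<and> y \<le> rdiv x x * y \<and> y \<le> y * ldiv x x))
       \<and> (balanced ldiv rdiv
          \<longleftrightarrow> (\<forall>x y. ldiv x x * y = y * ldiv x x \<and> y \<le> y * ldiv x x))
       \<and> (balanced ldiv rdiv
          \<longleftrightarrow> (\<forall>x y. rdiv x x * y = y * rdiv x x \<and> y \<le> rdiv x x * y))"
proof -
  note R = assms
  have c2: "balanced ldiv rdiv \<longleftrightarrow> (\<forall>x y. ldiv x x = rdiv x x \<and> y \<le> rdiv x x * y \<and> y \<le> y * ldiv x x)"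
    unfolding balanced_def self_residual_def positive_def by metis
  have b2: "balanced ldiv rdiv" if "\<forall>x y. ldiv x x = rdiv x x \<and> y \<le> rdiv x x * y \<and> y \<le> y * ldiv x x"
    using c2 that by blast
  have c3: "balanced ldiv rdiv \<longleftrightarrow> (\<forall>x y. ldiv x x * y = y * ldiv x x \<and> y \<le> y * ldiv x x)"
  proof
    assume B: "balanced ldiv rdiv"
    then show "\<forall>x y. ldiv x x * y = y * ldiv x x \<and> y \<le> y * ldiv x x"
      using bal_central[OF R B] c2 by blast
  next
    assume H: "\<forall>x y. ldiv x x * y = y * ldiv x x \<and> y \<le> y * ldiv x x"
    show "balanced ldiv rdiv"
      using three_to_one[OF R H] H by (intro b2) metis
  qed
  have c4: "balanced ldiv rdiv \<longleftrightarrow> (\<forall>x y. rdiv x x * y = y * rdiv x x \<and> y \<le> rdiv x x * y)"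
  proof
    assume B: "balanced ldiv rdiv"
    then show "\<forall>x y. rdiv x x * y = y * rdiv x x \<and> y \<le> rdiv x x * y"
      using bal_central[OF R B] c2 by metis
  next
    assume H: "\<forall>x y. rdiv x x * y = y * rdiv x x \<and> y \<le> rdiv x x * y"
    show "balanced ldiv rdiv"
      using four_to_one[OF R H] H by (intro b2) metis
  qed
  show ?thesis using c2 c3 c4 by blast
qed

end
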